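(* Let $P^1,\dots,P^4\in\mathbb{R}^n$ be in general position, let $Q^0$ be the equidistant point from $P^1,\dots,P^4$ with barycentric coordinate $\boldsymbol\lambda^0$, and suppose $\lambda^0_1<0$, $\lambda^0_2,\lambda^0_3,\lambda^0_4\ge0$. Let $Q^1=\pi(Q^0|L(P^2,P^3,P^4))$ with barycentric coordinate $\boldsymbol\lambda^1$ about $P^1,\dots,P^4$, and suppose $\lambda^1_2\ge0$, $\lambda^1_3\ge0$, $\lambda^1_4\ge0$. Then the center of the smallest enclosing circle of $P^1,\dots,P^4$ is $Q^\ast=Q^1$ and its radius is $d^\ast=d(P^2,Q^1)$.
   Context: $d$ is the Euclidean distance. Points are in general position if $P^2-P^1,\dots,P^m-P^1$ are linearly independent. $L(S^1,\dots,S^r)$ is the affine subspace spanned by the points; $\pi(Q'|L)$ is the orthogonal projection onto the affine subspace $L$. The barycentric coordinate of $Q\in L(P^1,\dots,P^m)$ is the unique $\boldsymbol\lambda$ with $\sum_i\lambda_i=1$, $Q=\sum_i\lambda_iP^i$. The equidistant point is the unique $Q^0\in L(P^1,\dots,P^m)$ with all $d(P^i,Q^0)$ equal. The smallest enclosing circle has center $Q^\ast$ attaining $\min_Q\max_i d(P^i,Q)$ and radius $d^\ast$ equal to this minimum. *)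

theory Defs
  imports "HOL-Analysis.Analysis"
begin

definition general_position4 :: "'a::euclidean_space \<Rightarrow> 'a \<Rightarrow> 'a \<Rightarrow> 'a \<Rightarrow> bool" where
  "general_position4 P1 P2 P3 P4 \<longleftrightarrow>
     (\<forall>c2 c3 c4::real. c2 *\<^sub>R (P2 - P1) + c3 *\<^sub>R (P3 - P1) + c4 *\<^sub>R (P4 - P1) = 0
        \<longrightarrow> c2 = 0 \<and> c3 = 0 \<and> c4 = 0)"

definition is_orth_proj :: "'a::euclidean_space set \<Rightarrow> 'a \<Rightarrow> 'a \<Rightarrow> bool" where
  "is_orth_proj L x q \<longleftrightarrow> q \<in> L \<and> (\<forall>y\<in>L. (x - q) \<bullet> (y - q) = 0)"

definition max_dist :: "'a::euclidean_space set \<Rightarrow> 'a \<Rightarrow> real" where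
  "max_dist S Q = Max ((\<lambda>p. dist p Q) ` S)"

definition is_sec_center :: "'a::euclidean_space set \<Rightarrow> 'a \<Rightarrow> bool" where
  "is_sec_center S Q \<longleftrightarrow> (\<forall>Q'. max_dist S Q \<le> max_dist S Q')"

definition sec_radius :: "'a::euclidean_space set \<Rightarrow> real" where
  "sec_radius S = (INF Q. max_dist S Q)"

end

theory Submission
  imports Defs
begin

lemma bary_unique:
  fixes P1 P2 P3 P4 X :: "'a::euclidean_space"
  assumes gp: "general_position4 P1 P2 P3 P4"
    and a: "a2 + a3 + a4 = 1" "X = a2 *\<^sub>R P2 + a3 *\<^sub>R P3 + a4 *\<^sub>R P4"
    and b: "b1 + b2 + b3 + b4 = 1" "X = b1 *\<^sub>R P1 + b2 *\<^sub>R P2 + b3 *\<^sub>R P3 + b4 *\<^sub>R P4"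
  shows "b1 = 0"
proof -
  have a4: "a4 = 1 - a2 - a3" and b1: "b1 = 1 - b2 - b3 - b4" using a b by linarith+
  have "(a2-b2) *\<^sub>R (P2-P1) + (a3-b3) *\<^sub>R (P3-P1) + (a4-b4) *\<^sub>R (P4-P1)
     = (a2 *\<^sub>R P2 + a3 *\<^sub>R P3 + a4 *\<^sub>R P4) - (b1 *\<^sub>R P1 + b2 *\<^sub>R P2 + b3 *\<^sub>R P3 + b4 *\<^sub>R P4)"
    unfolding a4 b1 by (simp add: algebra_simps)
  also have "\<dots> = 0" using a b by simp
  finally have "a2 = b2 \<and> a3 = b3 \<and> a4 = b4" using gp unfolding general_position4_def by fastforce
  then show ?thesis using a b by linarith
qed

lemma sq_split: fixes x d :: "'a::real_inner"
  shows "norm (x + d)^2 = norm x ^2 + 2 * (x \<bullet> d) + norm d ^2"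
  by (simp add: power2_norm_eq_inner inner_add_left inner_add_right inner_commute)

theorem theorem7:
  fixes P1 P2 P3 P4 Q0 Q1 :: "'a::euclidean_space"
    and l01 l02 l03 l04 l11 l12 l13 l14 :: real
  assumes gp: "general_position4 P1 P2 P3 P4"
    and Q0_in: "Q0 \<in> affine hull {P1, P2, P3, P4}"
    and Q0_eq: "dist P1 Q0 = dist P2 Q0" "dist P1 Q0 = dist P3 Q0" "dist P1 Q0 = dist P4 Q0"
    and bc0: "l01 + l02 + l03 + l04 = 1"
      "Q0 = l01 *\<^sub>R P1 + l02 *\<^sub>R P2 + l03 *\<^sub>R P3 + l04 *\<^sub>R P4"
    and sign0: "l01 < 0" "l02 \<ge> 0" "l03 \<ge> 0" "l04 \<ge> 0"
    and Q1: "is_orth_proj (affine hull {P2, P3, P4}) Q0 Q1"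
    and bc1: "l11 + l12 + l13 + l14 = 1"
      "Q1 = l11 *\<^sub>R P1 + l12 *\<^sub>R P2 + l13 *\<^sub>R P3 + l14 *\<^sub>R P4"
    and sign1: "l12 \<ge> 0" "l13 \<ge> 0" "l14 \<ge> 0"
  shows "(\<forall>Q. is_sec_center {P1, P2, P3, P4} Q \<longleftrightarrow> Q = Q1)
         \<and> sec_radius {P1, P2, P3, P4} = dist P2 Q1"
proof -
  let ?L = "affine hull {P2, P3, P4}"
  let ?S = "{P1, P2, P3, P4}"
  define d where "d = Q0 - Q1"
  define R where "R = dist P1 Q0"
  define r where "r = dist P2 Q1"
  have Q1L: "Q1 \<in> ?L" and orth: "\<And>y. y \<in> ?L \<Longrightarrow> d \<bullet> (y - Q1) = 0"
    using Q1 unfolding is_orth_proj_def d_def by auto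
  have PL: "P2 \<in> ?L" "P3 \<in> ?L" "P4 \<in> ?L" by (auto intro: hull_inc)
  have dsq: "dist P Q0 ^2 = dist P Q1 ^2 + norm d ^2" if "P \<in> ?L" for P
  proof -
    have "P - Q0 = (P - Q1) + (- d)" unfolding d_def by simp
    then have "dist P Q0 ^2 = norm (P - Q1)^2 + 2 * ((P - Q1) \<bullet> (-d)) + norm (-d)^2"
      by (simp only: dist_norm sq_split)
    moreover have "(P - Q1) \<bullet> (-d) = 0" using orth[OF that] by (simp add: inner_commute)
    ultimately show ?thesis by (simp add: dist_norm)
  qed
  have eqr: "dist P2 Q1 = r" "dist P3 Q1 = r" "dist P4 Q1 = r"
  proof -
    have "dist P3 Q1 ^2 = r^2" "dist P4 Q1 ^2 = r^2"
      using dsq[OF PL(1)] dsq[OF PL(2)] dsq[OF PL(3)] Q0_eq unfolding r_def by auto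
    then show "dist P2 Q1 = r" "dist P3 Q1 = r" "dist P4 Q1 = r"
      unfolding r_def by (auto simp: power2_eq_iff_nonneg)
  qed
  obtain a2 a3 a4 where aa: "a2 + a3 + a4 = 1" "Q1 = a2 *\<^sub>R P2 + a3 *\<^sub>R P3 + a4 *\<^sub>R P4"
    using Q1L unfolding affine_hull_3 by auto
  have l11: "l11 = 0" using bary_unique[OF gp aa bc1] .
  have "Q0 \<notin> ?L"
  proof
    assume "Q0 \<in> ?L"
    then obtain c2 c3 c4 where "c2 + c3 + c4 = 1" "Q0 = c2 *\<^sub>R P2 + c3 *\<^sub>R P3 + c4 *\<^sub>R P4"
      unfolding affine_hull_3 by auto
    from bary_unique[OF gp this bc0] sign0(1) show False by simp
  qed
  then have "d \<noteq> 0" using Q1L unfolding d_def by auto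
  then have dpos: "norm d ^2 > 0" by simp
  have "d = l01 *\<^sub>R (P1 - Q1) + (l02 *\<^sub>R (P2 - Q1) + l03 *\<^sub>R (P3 - Q1) + l04 *\<^sub>R (P4 - Q1))"
  proof -
    have "l01 *\<^sub>R (P1 - Q1) + (l02 *\<^sub>R (P2 - Q1) + l03 *\<^sub>R (P3 - Q1) + l04 *\<^sub>R (P4 - Q1))
      = Q0 - (l01 + l02 + l03 + l04) *\<^sub>R Q1"
      unfolding bc0(2) by (simp add: algebra_simps)
    then show ?thesis using bc0(1) unfolding d_def by simp
  qed
  then have "d \<bullet> d = l01 * (d \<bullet> (P1 - Q1)) + (l02 * (d \<bullet> (P2 - Q1)) + l03 * (d \<bullet> (P3 - Q1)) + l04 * (d \<bullet> (P4 - Q1)))"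
    by (metis inner_add_right inner_scaleR_right)
  then have "d \<bullet> d = l01 * (d \<bullet> (P1 - Q1))" using orth PL by simp
  moreover have "d \<bullet> d > 0" using dpos by (simp add: power2_norm_eq_inner)
  ultimately have "l01 * (d \<bullet> (P1 - Q1)) > 0" by simp
  then have "d \<bullet> (P1 - Q1) < 0" using sign0(1) by (simp add: zero_less_mult_iff)
  then have neg: "(P1 - Q1) \<bullet> d < 0" by (simp add: inner_commute)
  have "P1 - Q1 = (P1 - Q0) + d" unfolding d_def by simp
  then have "dist P1 Q1 ^2 = R^2 + 2 * ((P1 - Q0) \<bullet> d) + norm d ^2"
    unfolding R_def by (simp only: dist_norm sq_split)
  moreover have "(P1 - Q0) \<bullet> d = (P1 - Q1) \<bullet> d - norm d ^2"
    unfolding d_def by (simp add: inner_diff_left power2_norm_eq_inner)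
  moreover have "r^2 = R^2 - norm d^2" using dsq[OF PL(1)] Q0_eq unfolding R_def r_def by simp
  ultimately have "dist P1 Q1 ^2 < r^2" using neg by simp
  then have P1lt: "dist P1 Q1 < r" using eqr by (smt (verit) power_mono zero_le_dist)
  have fin: "finite ((\<lambda>p. dist p Q) ` ?S)" for Q by simp
  have ge: "dist p Q \<le> max_dist ?S Q" if "p \<in> ?S" for p Q
    unfolding max_dist_def using fin that by (intro Max_ge) auto
  have mQ1: "max_dist ?S Q1 = r"
  proof (rule antisym)
    show "max_dist ?S Q1 \<le> r" unfolding max_dist_def using fin P1lt eqr by (subst Max_le_iff) auto
    show "r \<le> max_dist ?S Q1" using ge[of P2 Q1] eqr by simp
  qed
  have key: "max_dist ?S Q ^2 \<ge> r^2 + norm (Q - Q1)^2" for Q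
  proof -
    let ?e = "Q1 - Q"
    have w: "l12 + l13 + l14 = 1" "Q1 = l12 *\<^sub>R P2 + l13 *\<^sub>R P3 + l14 *\<^sub>R P4"
      using bc1 l11 by auto
    have z: "l12 *\<^sub>R (P2 - Q1) + l13 *\<^sub>R (P3 - Q1) + l14 *\<^sub>R (P4 - Q1) = 0"
    proof -
      have "l12 *\<^sub>R (P2 - Q1) + l13 *\<^sub>R (P3 - Q1) + l14 *\<^sub>R (P4 - Q1) = Q1 - (l12 + l13 + l14) *\<^sub>R Q1"
        by (subst (2) w(2)) (simp add: algebra_simps)
      then show ?thesis using w(1) by simp
    qed
    have ex: "dist P Q ^2 = dist P Q1 ^2 + 2 * ((P - Q1) \<bullet> ?e) + norm ?e ^2" for P
    proof -
      have "P - Q = (P - Q1) + ?e" by simp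
      then show ?thesis by (simp only: dist_norm sq_split)
    qed
    have "l12 * ((P2 - Q1) \<bullet> ?e) + l13 * ((P3 - Q1) \<bullet> ?e) + l14 * ((P4 - Q1) \<bullet> ?e) = 0"
      using arg_cong[OF z, of "\<lambda>v. v \<bullet> ?e"] by (simp add: inner_add_left)
    then have avg: "l12 * dist P2 Q ^2 + l13 * dist P3 Q ^2 + l14 * dist P4 Q ^2 = r^2 + norm ?e ^2"
    proof -
      have "l12 * dist P2 Q ^2 + l13 * dist P3 Q ^2 + l14 * dist P4 Q ^2
        = l12 * (r^2 + 2 * ((P2 - Q1) \<bullet> ?e) + norm ?e ^2) + l13 * (r^2 + 2 * ((P3 - Q1) \<bullet> ?e) + norm ?e ^2)
          + l14 * (r^2 + 2 * ((P4 - Q1) \<bullet> ?e) + norm ?e ^2)"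
        using ex[of P2] ex[of P3] ex[of P4] eqr by simp
      also have "\<dots> = (l12 + l13 + l14) * (r^2 + norm ?e ^2)
          + 2 * (l12 * ((P2 - Q1) \<bullet> ?e) + l13 * ((P3 - Q1) \<bullet> ?e) + l14 * ((P4 - Q1) \<bullet> ?e))"
        by (simp only: ring_distribs)
      also have "\<dots> = r^2 + norm ?e ^2" using w(1) \<open>l12 * _ + _ + _ = 0\<close> by simp
      finally show ?thesis .
    qed
    let ?M = "max_dist ?S Q"
    have b: "dist P Q ^2 \<le> ?M ^2" if "P \<in> ?S" for P using ge[OF that, of Q] by (simp add: power_mono)
    have "l12 * dist P2 Q ^2 + l13 * dist P3 Q ^2 + l14 * dist P4 Q ^2 \<le> l12 * ?M^2 + l13 * ?M^2 + l14 * ?M^2"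
      using b[of P2] b[of P3] b[of P4] sign1 by (intro add_mono mult_left_mono) auto
    also have "\<dots> = ?M^2" using w(1) by (metis distrib_right mult_1)
    finally show ?thesis using avg by (simp add: norm_minus_commute)
  qed
  have rnn: "r \<ge> 0" unfolding r_def by simp
  have geQ: "r \<le> max_dist ?S Q" for Q
  proof -
    have "r^2 \<le> max_dist ?S Q ^2" using key[of Q] by (smt (verit) zero_le_power2)
    moreover have "max_dist ?S Q \<ge> 0" using ge[of P1 Q] zero_le_dist[of P1 Q] by (simp del: zero_le_dist)
    ultimately show ?thesis using power2_le_imp_le by blast
  qed
  have strict: "r < max_dist ?S Q" if "Q \<noteq> Q1" for Q
  proof -
    have "norm (Q - Q1)^2 > 0" using that by simp
    then have "r^2 < max_dist ?S Q ^2" using key[of Q] by linarith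
    moreover have "max_dist ?S Q \<ge> 0" using ge[of P1 Q] zero_le_dist[of P1 Q] by (simp del: zero_le_dist)
    ultimately show ?thesis using rnn by (smt (verit) power_mono)
  qed
  have A: "is_sec_center ?S Q \<longleftrightarrow> Q = Q1" for Q
    unfolding is_sec_center_def using mQ1 geQ strict by (smt (verit))
  have B: "sec_radius ?S = r"
    unfolding sec_radius_def
    by (rule cInf_eq_minimum[where z=r]) (use mQ1 geQ in \<open>auto intro: image_eqI[where x=Q1]\<close>)
  show ?thesis using A B r_def by simp
qed

end
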